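(* Let $\mathcal{P}$ be a set of inductively defined predicates and let $P \in \mathcal{P}$, with parameters $(\vec{\alpha},\vec{\beta},\vec{\xi})$, be syntactically compositional. Then $P$ is semantically compositional, i.e. for every pair $\vec{\gamma}=(\gamma_1,\gamma_2)$ of a location variable and a data variable, the entailment $$\exists \vec{\beta}.\ P(\vec{\alpha},\vec{\beta},\vec{\xi}) \ast P(\vec{\beta},\vec{\gamma},\vec{\xi}) \Rightarrow P(\vec{\alpha},\vec{\gamma},\vec{\xi})$$ holds, that is, every stack–heap pair $(s,h)$ satisfying the left-hand side also satisfies the right-hand side.
   Context: Separation logic setting: location variables (interpreted in a set $\mathbb{L}$ of locations, with a constant ${\sf nil}$) and data variables (interpreted as data values, multisets of values, etc.); a set $\mathcal{F}$ of pointer fields and $\mathcal{D}$ of data fields. A state is a pair $(s,h)$: a stack $s$ assigning values to variables, and a heap $h$, a finite partial function mapping pairs (location, pointer field) to locations and pairs (location, data field) to data values. Formulas: pure formulas $\Pi$ (conjunctions of (dis)equalities of location variables and constraints $\Delta$ over data variables in some decidable theory), spatial formulas $\Sigma ::= \mathtt{emp} \mid E\mapsto\rho \mid Q(E,\vec{F}) \mid \Sigma\ast\Sigma$, and formulas built as $\Pi\land\Sigma$, disjunction and existential quantification. $\mathtt{emp}$ holds iff the heap is empty; $E\mapsto\{(f_i,x_i)\}_{i\in I}$ holds iff the heap is defined exactly on location $s(E)$ with fields $f_i$ and $h(s(E),f_i)=s(x_i)$; $\Sigma_1\ast\Sigma_2$ holds iff the heap splits into two domain-disjoint parts satisfying $\Sigma_1$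 and $\Sigma_2$ respectively. Each predicate $Q\in\mathcal{P}$ is defined by a finite set of rules $Q(E,\vec{F}) ::= \exists\vec{Z}.\ \Pi\land\Sigma$, with least-fixed-point semantics. A rule is a base rule if $\Sigma$ contains no predicate atoms, otherwise inductive. Every inductive rule $Q(E,\vec F)::=\exists \vec Z.\Pi\land\Sigma_1\ast\Sigma_2$ satisfies: $\Sigma_1$ consists only of points-to atoms, contains a unique points-to atom with source $E$, contains all location variables of $\vec Z$, and its Gaifman graph is a connected DAG in which every vertex is reachable from $E$; $\Sigma_2$ consists only of predicate atoms $Q'(Z,\vec{Z'})$ with $Z$ a vertex of that graph without outgoing arcs. Syntactic compositionality: $P$ has parameters $(\vec\alpha,\vec\beta,\vec\xi)$ with source parameters $\vec\alpha=(\alpha_1,\alpha_2)=(E,C)$, hole parameters $\vec\beta=(\beta_1,\beta_2)=(F,H)$ ($E,F$ location variables, $C,H$ data variables) and static parameters $\vec\xi$. $P$ is syntactically compositional if its definition has exactly one base rule, namely $P(\vec\alpha,\vec\beta,\vec\xi)::=\alpha_1=\beta_1\land\alpha_2=\beta_2\land\mathtt{emp}$, and at least one inductive rule, and every inductive rule has the form $P(\vec\alpha,\vec\beta,\vec\xi)::=\exists\vec Z.\ \Pi\land\Sigma_1\ast\Sigma_2\ast P(\vec\gamma,\vec\beta,\vec\xi)$ where $\Sigma_1$ is a nonempty separating conjunction of points-to atoms, $\Sigma_2$ is a (possibly empty) separating conjunction of predicate atoms (possibly including $P$ atoms), $\vec\gamma$ consists of variables of $\vec Z$, and the variables of $\vec\beta$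 do not occur in $\Pi$, $\Sigma_1$, $\Sigma_2$ or $\vec\gamma$ (and the rule satisfies the general root/connectedness conditions above). *)

theory Defs
  imports "HOL-Library.Multiset"
begin

text \<open>Type parameters: 'x location variables, 'y data variables, 'r relation symbols of the
  (abstract) data theory, 'f pointer fields, 'g data fields, 'p predicate names,
  'l locations, 'd data values.\<close>

datatype 'x lterm = LV 'x | LNil

datatype ('x,'y,'r) pure =
    LEq "'x lterm" "'x lterm"
  | LNeq "'x lterm" "'x lterm"
  | DEq 'y 'y
  | DRel 'r "'y list"

datatype ('x,'y,'f,'g) pto = PTo 'x "('f \<times> 'x) list" "('g \<times> 'y) list"

datatype ('x,'y,'p) patom = PAtom 'p "'x list" "'y list"

text \<open>Symbolic heap  \<exists> Zl Zd. \<Pi> \<and> (points-to atoms) \<ast> (predicate atoms)\<close>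
datatype ('x,'y,'r,'f,'g,'p) sh =
  SH "'x list" "'y list" "('x,'y,'r) pure list" "('x,'y,'f,'g) pto list" "('x,'y,'p) patom list"

record ('x,'y,'r,'f,'g,'p) sys =
  lparams :: "'p \<Rightarrow> 'x list"
  dparams :: "'p \<Rightarrow> 'y list"
  rules :: "'p \<Rightarrow> ('x,'y,'r,'f,'g,'p) sh list"

fun lvars_lterm :: "'x lterm \<Rightarrow> 'x set" where
  "lvars_lterm (LV x) = {x}"
| "lvars_lterm LNil = {}"

fun lvars_pure :: "('x,'y,'r) pure \<Rightarrow> 'x set" where
  "lvars_pure (LEq a b) = lvars_lterm a \<union> lvars_lterm b"
| "lvars_pure (LNeq a b) = lvars_lterm a \<union> lvars_lterm b"
| "lvars_pure (DEq _ _) = {}"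
| "lvars_pure (DRel _ _) = {}"

fun dvars_pure :: "('x,'y,'r) pure \<Rightarrow> 'y set" where
  "dvars_pure (LEq _ _) = {}"
| "dvars_pure (LNeq _ _) = {}"
| "dvars_pure (DEq x y) = {x, y}"
| "dvars_pure (DRel _ ys) = set ys"

fun pto_src :: "('x,'y,'f,'g) pto \<Rightarrow> 'x" where
  "pto_src (PTo E _ _) = E"

fun lvars_pto :: "('x,'y,'f,'g) pto \<Rightarrow> 'x set" where
  "lvars_pto (PTo E pf _) = insert E (snd ` set pf)"

fun dvars_pto :: "('x,'y,'f,'g) pto \<Rightarrow> 'y set" where
  "dvars_pto (PTo _ _ df) = snd ` set df"

fun lvars_patom :: "('x,'y,'p) patom \<Rightarrow> 'x set" where
  "lvars_patom (PAtom _ xs _) = set xs"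

fun dvars_patom :: "('x,'y,'p) patom \<Rightarrow> 'y set" where
  "dvars_patom (PAtom _ _ ys) = set ys"

fun is_base :: "('x,'y,'r,'f,'g,'p) sh \<Rightarrow> bool" where
  "is_base (SH _ _ _ _ pr) = (pr = [])"

type_synonym ('l,'f,'g,'d) heap = "(('l \<times> 'f) \<rightharpoonup> 'l) \<times> (('l \<times> 'g) \<rightharpoonup> 'd)"
type_synonym ('x,'y,'l,'d) stack = "('x \<Rightarrow> 'l) \<times> ('y \<Rightarrow> 'd)"

definition hemp :: "('l,'f,'g,'d) heap" where
  "hemp = (Map.empty, Map.empty)"

definition hdisj :: "('l,'f,'g,'d) heap \<Rightarrow> ('l,'f,'g,'d) heap \<Rightarrow> bool" where
  "hdisj h1 h2 \<longleftrightarrow> dom (fst h1) \<inter> dom (fst h2) = {} \<and> dom (snd h1) \<inter> dom (snd h2) = {}"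

definition hunion :: "('l,'f,'g,'d) heap \<Rightarrow> ('l,'f,'g,'d) heap \<Rightarrow> ('l,'f,'g,'d) heap" where
  "hunion h1 h2 = (fst h1 ++ fst h2, snd h1 ++ snd h2)"

definition heap_finite :: "('l,'f,'g,'d) heap \<Rightarrow> bool" where
  "heap_finite h \<longleftrightarrow> finite (dom (fst h)) \<and> finite (dom (snd h))"

fun lterm_val :: "'l \<Rightarrow> ('x,'y,'l,'d) stack \<Rightarrow> 'x lterm \<Rightarrow> 'l" where
  "lterm_val nil s (LV x) = fst s x"
| "lterm_val nil s LNil = nil"

text \<open>I interprets the relation symbols of the data theory; nil is the constant nil.\<close>
fun pure_sat :: "('r \<Rightarrow> 'd list \<Rightarrow> bool) \<Rightarrow> 'l \<Rightarrow> ('x,'y,'l,'d) stack \<Rightarrow> ('x,'y,'r) pure \<Rightarrow> bool" where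
  "pure_sat I nil s (LEq a b) = (lterm_val nil s a = lterm_val nil s b)"
| "pure_sat I nil s (LNeq a b) = (lterm_val nil s a \<noteq> lterm_val nil s b)"
| "pure_sat I nil s (DEq x y) = (snd s x = snd s y)"
| "pure_sat I nil s (DRel r ys) = I r (map (snd s) ys)"

fun pto_sat :: "('x,'y,'l,'d) stack \<Rightarrow> ('l,'f,'g,'d) heap \<Rightarrow> ('x,'y,'f,'g) pto \<Rightarrow> bool" where
  "pto_sat s h (PTo E pf df) \<longleftrightarrow>
     dom (fst h) = {(fst s E, f) | f. f \<in> fst ` set pf} \<and>
     (\<forall>(f,x) \<in> set pf. fst h (fst s E, f) = Some (fst s x)) \<and>
     dom (snd h) = {(fst s E, g) | g. g \<in> fst ` set df} \<and>
     (\<forall>(g,y) \<in> set df. snd h (fst s E, g) = Some (snd s y))"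

fun sepconj :: "(('l,'f,'g,'d) heap \<Rightarrow> bool) list \<Rightarrow> ('l,'f,'g,'d) heap \<Rightarrow> bool" where
  "sepconj [] h = (h = hemp)"
| "sepconj (A # As) h = (\<exists>h1 h2. hdisj h1 h2 \<and> h = hunion h1 h2 \<and> A h1 \<and> sepconj As h2)"

fun sh_sat :: "('r \<Rightarrow> 'd list \<Rightarrow> bool) \<Rightarrow> 'l \<Rightarrow>
    ('p \<Rightarrow> 'l list \<Rightarrow> 'd list \<Rightarrow> ('l,'f,'g,'d) heap \<Rightarrow> bool) \<Rightarrow>
    ('x,'y,'l,'d) stack \<Rightarrow> ('l,'f,'g,'d) heap \<Rightarrow> ('x,'y,'r,'f,'g,'p) sh \<Rightarrow> bool" where
  "sh_sat I nil PS s h (SH zl zd pu pt pr) \<longleftrightarrow>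
     (\<exists>s'. (\<forall>x. x \<notin> set zl \<longrightarrow> fst s' x = fst s x) \<and>
           (\<forall>y. y \<notin> set zd \<longrightarrow> snd s' y = snd s y) \<and>
           (\<forall>p \<in> set pu. pure_sat I nil s' p) \<and>
           sepconj (map (\<lambda>a h. pto_sat s' h a) pt @
                    map (\<lambda>a h. case a of PAtom Q xs ys \<Rightarrow> PS Q (map (fst s') xs) (map (snd s') ys) h) pr) h)"

definition pred_sem :: "('r \<Rightarrow> 'd list \<Rightarrow> bool) \<Rightarrow> 'l \<Rightarrow> ('x,'y,'r,'f,'g,'p) sys \<Rightarrow>
    ('p \<times> 'l list \<times> 'd list \<times> ('l,'f,'g,'d) heap) set" where
  "pred_sem I nil S = lfp (\<lambda>X. {(Q, ls, ds, h). \<exists>r \<in> set (rules S Q). \<exists>s.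
       map (fst s) (lparams S Q) = ls \<and> map (snd s) (dparams S Q) = ds \<and>
       sh_sat I nil (\<lambda>Q' ls' ds' h'. (Q', ls', ds', h') \<in> X) s h r})"

definition sat :: "('r \<Rightarrow> 'd list \<Rightarrow> bool) \<Rightarrow> 'l \<Rightarrow> ('x,'y,'r,'f,'g,'p) sys \<Rightarrow>
    ('x,'y,'l,'d) stack \<Rightarrow> ('l,'f,'g,'d) heap \<Rightarrow> ('x,'y,'r,'f,'g,'p) sh \<Rightarrow> bool" where
  "sat I nil S s h \<phi> = sh_sat I nil (\<lambda>Q ls ds h. (Q, ls, ds, h) \<in> pred_sem I nil S) s h \<phi>"

definition entails :: "('r \<Rightarrow> 'd list \<Rightarrow> bool) \<Rightarrow> 'l \<Rightarrow> ('x,'y,'r,'f,'g,'p) sys \<Rightarrow>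
    ('x,'y,'r,'f,'g,'p) sh \<Rightarrow> ('x,'y,'r,'f,'g,'p) sh \<Rightarrow> bool" where
  "entails I nil S A B \<longleftrightarrow>
     (\<forall>(s :: ('x,'y,'l,'d) stack) (h :: ('l,'f,'g,'d) heap).
        heap_finite h \<longrightarrow> sat I nil S s h A \<longrightarrow> sat I nil S s h B)"

definition gaif_verts :: "('x,'y,'f,'g) pto list \<Rightarrow> 'x set" where
  "gaif_verts pt = (\<Union>a \<in> set pt. lvars_pto a)"

definition gaif_arcs :: "('x,'y,'f,'g) pto list \<Rightarrow> ('x \<times> 'x) set" where
  "gaif_arcs pt = {(E, x) | E pf df x. PTo E pf df \<in> set pt \<and> x \<in> snd ` set pf}"

definition rooted_rule :: "'x \<Rightarrow> 'x list \<Rightarrow> ('x,'y,'f,'g) pto list \<Rightarrow> ('x,'y,'p) patom list \<Rightarrow> bool" where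
  "rooted_rule E zl pt pr \<longleftrightarrow>
     length (filter (\<lambda>a. pto_src a = E) pt) = 1 \<and>
     set zl \<subseteq> gaif_verts pt \<and>
     acyclic (gaif_arcs pt) \<and>
     (\<forall>v \<in> gaif_verts pt. (E, v) \<in> (gaif_arcs pt)\<^sup>*) \<and>
     (\<forall>a \<in> set pr. case a of PAtom Q xs ys \<Rightarrow>
        xs \<noteq> [] \<and> hd xs \<in> gaif_verts pt \<and> (\<forall>w. (hd xs, w) \<notin> gaif_arcs pt))"

fun wf_rule :: "('x,'y,'r,'f,'g,'p) sys \<Rightarrow> 'p set \<Rightarrow> 'p \<Rightarrow> ('x,'y,'r,'f,'g,'p) sh \<Rightarrow> bool" where
  "wf_rule S Ps Q (SH zl zd pu pt pr) \<longleftrightarrow>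
     set zl \<inter> set (lparams S Q) = {} \<and> set zd \<inter> set (dparams S Q) = {} \<and>
     (\<Union>p \<in> set pu. lvars_pure p) \<union> (\<Union>a \<in> set pt. lvars_pto a) \<union> (\<Union>a \<in> set pr. lvars_patom a)
        \<subseteq> set zl \<union> set (lparams S Q) \<and>
     (\<Union>p \<in> set pu. dvars_pure p) \<union> (\<Union>a \<in> set pt. dvars_pto a) \<union> (\<Union>a \<in> set pr. dvars_patom a)
        \<subseteq> set zd \<union> set (dparams S Q) \<and>
     (\<forall>a \<in> set pr. case a of PAtom Q' xs ys \<Rightarrow>
        Q' \<in> Ps \<and> length xs = length (lparams S Q') \<and> length ys = length (dparams S Q')) \<and>
     (pr \<noteq> [] \<longrightarrow> rooted_rule (hd (lparams S Q)) zl pt pr)"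

definition wf_sys :: "('x,'y,'r,'f,'g,'p) sys \<Rightarrow> 'p set \<Rightarrow> bool" where
  "wf_sys S Ps \<longleftrightarrow> finite Ps \<and>
     (\<forall>Q \<in> Ps. lparams S Q \<noteq> [] \<and> distinct (lparams S Q) \<and> distinct (dparams S Q) \<and>
        (\<forall>r \<in> set (rules S Q). wf_rule S Ps Q r))"

text \<open>Parameters of P are (\<alpha>1 # \<beta>1 # \<xi>l, \<alpha>2 # \<beta>2 # \<xi>d): \<alpha> = (\<alpha>1,\<alpha>2) source, \<beta> = (\<beta>1,\<beta>2) hole,
  \<xi> = (\<xi>l, \<xi>d) static parameters.\<close>
definition syn_compositional :: "('x,'y,'r,'f,'g,'p) sys \<Rightarrow> 'p \<Rightarrow> bool" where
  "syn_compositional S P \<longleftrightarrow>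
    (\<exists>\<alpha>1 \<beta>1 \<xi>l \<alpha>2 \<beta>2 \<xi>d.
       lparams S P = \<alpha>1 # \<beta>1 # \<xi>l \<and> dparams S P = \<alpha>2 # \<beta>2 # \<xi>d \<and>
       (\<exists>pu. filter is_base (rules S P) = [SH [] [] pu [] []] \<and>
             set pu = {LEq (LV \<alpha>1) (LV \<beta>1), DEq \<alpha>2 \<beta>2}) \<and>
       (\<exists>r \<in> set (rules S P). \<not> is_base r) \<and>
       (\<forall>r \<in> set (rules S P). \<not> is_base r \<longrightarrow>
          (\<exists>zl zd pu pt pr \<Sigma>2 \<gamma>1 \<gamma>2.
             r = SH zl zd pu pt pr \<and> pt \<noteq> [] \<and>
             mset pr = mset (PAtom P (\<gamma>1 # \<beta>1 # \<xi>l) (\<gamma>2 # \<beta>2 # \<xi>d) # \<Sigma>2) \<and>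
             \<gamma>1 \<in> set zl \<and> \<gamma>2 \<in> set zd \<and> \<gamma>1 \<noteq> \<beta>1 \<and> \<gamma>2 \<noteq> \<beta>2 \<and>
             \<beta>1 \<notin> (\<Union>p \<in> set pu. lvars_pure p) \<union> (\<Union>a \<in> set pt. lvars_pto a) \<union> (\<Union>a \<in> set \<Sigma>2. lvars_patom a) \<and>
             \<beta>2 \<notin> (\<Union>p \<in> set pu. dvars_pure p) \<union> (\<Union>a \<in> set pt. dvars_pto a) \<union> (\<Union>a \<in> set \<Sigma>2. dvars_patom a))))"

text \<open>Semantic compositionality: for all (\<gamma>1,\<gamma>2) (not captured by the quantifier \<exists>\<beta>),
  \<exists>\<beta>.\<close>
definition sem_compositional :: "('r \<Rightarrow> 'd list \<Rightarrow> bool) \<Rightarrow> 'l \<Rightarrow> ('x,'y,'r,'f,'g,'p) sys \<Rightarrow> 'p \<Rightarrow> bool" where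
  "sem_compositional I nil S P \<longleftrightarrow>
    (\<exists>\<alpha>1 \<beta>1 \<xi>l \<alpha>2 \<beta>2 \<xi>d.
       lparams S P = \<alpha>1 # \<beta>1 # \<xi>l \<and> dparams S P = \<alpha>2 # \<beta>2 # \<xi>d \<and>
       (\<forall>\<gamma>1 \<gamma>2. \<gamma>1 \<noteq> \<beta>1 \<and> \<gamma>2 \<noteq> \<beta>2 \<longrightarrow>
          entails I nil S
            (SH [\<beta>1] [\<beta>2] [] []
               [PAtom P (\<alpha>1 # \<beta>1 # \<xi>l) (\<alpha>2 # \<beta>2 # \<xi>d), PAtom P (\<beta>1 # \<gamma>1 # \<xi>l) (\<beta>2 # \<gamma>2 # \<xi>d)])
            (SH [] [] [] [] [PAtom P (\<alpha>1 # \<gamma>1 # \<xi>l) (\<alpha>2 # \<gamma>2 # \<xi>d)])))"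

end

theory Submission
  imports Defs
begin

lemma hunion_hemp[simp]: "hunion h hemp = h" "hunion hemp h = h"
  by (auto simp: hunion_def hemp_def)

lemma hdisj_hemp[simp]: "hdisj h hemp" "hdisj hemp h"
  by (auto simp: hdisj_def hemp_def)

lemma hdisj_sym: "hdisj a b = hdisj b a"
  by (auto simp: hdisj_def)

lemma hdisj_union1[simp]: "hdisj (hunion a b) c = (hdisj a c \<and> hdisj b c)"
  by (auto simp: hdisj_def hunion_def)

lemma hdisj_union2[simp]: "hdisj c (hunion a b) = (hdisj c a \<and> hdisj c b)"
  by (auto simp: hdisj_def hunion_def)

lemma hunion_assoc: "hunion (hunion a b) c = hunion a (hunion b c)"
  by (simp add: hunion_def map_add_assoc)

lemma hunion_comm: "hdisj a b \<Longrightarrow> hunion a b = hunion b a"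
  by (auto simp: hunion_def hdisj_def intro: map_add_comm)

lemma sepconj_mono:
  "list_all2 (\<lambda>A B. \<forall>h. A h \<longrightarrow> B h) As Bs \<Longrightarrow> sepconj As h \<Longrightarrow> sepconj Bs h"
proof (induction As Bs arbitrary: h rule: list_all2_induct)
  case Nil then show ?case by simp
next
  case (Cons A As B Bs)
  then obtain h1 h2 where "hdisj h1 h2" "h = hunion h1 h2" "A h1" "sepconj As h2"
    by (auto simp del: split_paired_Ex)
  moreover have "B h1" using Cons.hyps(1) \<open>A h1\<close> by blast
  moreover have "sepconj Bs h2" using Cons.IH \<open>sepconj As h2\<close> by blast
  ultimately show ?case by (simp del: split_paired_Ex) blast
qed

lemma sc_mod:
  assumes "sepconj (As @ A # Bs) h" "hdisj h h2"
    "\<And>h'. A h' \<Longrightarrow> hdisj h' h2 \<Longrightarrow> B (hunion h' h2)"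
  shows "sepconj (As @ B # Bs) (hunion h h2)"
  using assms(1,2)
proof (induction As arbitrary: h)
  case Nil
  then obtain h1 h3 where d: "hdisj h1 h3" "h = hunion h1 h3" "A h1" "sepconj Bs h3" by (auto simp del: split_paired_Ex)
  have "B (hunion h1 h2)" using assms(3) d Nil by auto
  moreover have "hunion h h2 = hunion (hunion h1 h2) h3"
    using d Nil by (metis hunion_assoc hunion_comm hdisj_union1)
  moreover have "hdisj (hunion h1 h2) h3" using d Nil by (simp add: hdisj_sym)
  ultimately show ?case using d
    by (simp only: append.simps sepconj.simps) (rule exI[of _ "hunion h1 h2"], rule exI[of _ h3], simp)
next
  case (Cons C As)
  then obtain h1 h3 where d: "hdisj h1 h3" "h = hunion h1 h3" "C h1" "sepconj (As @ A # Bs) h3" by (auto simp del: split_paired_Ex)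
  have "sepconj (As @ B # Bs) (hunion h3 h2)" using Cons d by auto
  moreover have "hunion h h2 = hunion h1 (hunion h3 h2)" using d by (simp add: hunion_assoc)
  moreover have "hdisj h1 (hunion h3 h2)" using d Cons by simp
  ultimately show ?case using d
    by (simp only: append.simps sepconj.simps) (rule exI[of _ h1], rule exI[of _ "hunion h3 h2"], simp)
qed

lemma lterm_val_cong: "(\<forall>x\<in>lvars_lterm a. fst s x = fst t x) \<Longrightarrow> lterm_val nil s a = lterm_val nil t a"
  by (cases a) auto

lemma pure_sat_cong:
  "(\<forall>x\<in>lvars_pure p. fst s x = fst t x) \<Longrightarrow> (\<forall>y\<in>dvars_pure p. snd s y = snd t y) \<Longrightarrow>
   pure_sat I nil s p = pure_sat I nil t p"
proof (cases p)
  case (DRel r ys)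
  assume "\<forall>y\<in>dvars_pure p. snd s y = snd t y"
  then have e: "map (snd s) ys = map (snd t) ys" using DRel by (auto intro: map_cong)
  show ?thesis using DRel e by (metis pure_sat.simps(4))
next
  case (LEq a b)
  assume h: "\<forall>x\<in>lvars_pure p. fst s x = fst t x"
  have "lterm_val nil s a = lterm_val nil t a" "lterm_val nil s b = lterm_val nil t b"
    using h LEq by (auto intro!: lterm_val_cong)
  then show ?thesis using LEq by simp
next
  case (LNeq a b)
  assume h: "\<forall>x\<in>lvars_pure p. fst s x = fst t x"
  have "lterm_val nil s a = lterm_val nil t a" "lterm_val nil s b = lterm_val nil t b"
    using h LNeq by (auto intro!: lterm_val_cong)
  then show ?thesis using LNeq by simp
qed auto

lemma pto_sat_cong:
  "(\<forall>x\<in>lvars_pto a. fst s x = fst t x) \<Longrightarrow> (\<forall>y\<in>dvars_pto a. snd s y = snd t y) \<Longrightarrow>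
   pto_sat s h a = pto_sat t h a"
  by (cases a) (auto simp: case_prod_beta)

lemma sh_sat_mono:
  assumes "\<And>Q ls ds h. PS Q ls ds h \<Longrightarrow> PS' Q ls ds h" "sh_sat I nil PS s h r"
  shows "sh_sat I nil PS' s h r"
proof (cases r)
  case (SH zl zd pu pt pr)
  then obtain s' where s': "\<forall>x. x \<notin> set zl \<longrightarrow> fst s' x = fst s x"
    "\<forall>y. y \<notin> set zd \<longrightarrow> snd s' y = snd s y" "\<forall>p \<in> set pu. pure_sat I nil s' p"
    "sepconj (map (\<lambda>a h. pto_sat s' h a) pt @
                    map (\<lambda>a h. case a of PAtom Q xs ys \<Rightarrow> PS Q (map (fst s') xs) (map (snd s') ys) h) pr) h"
    using assms(2) by auto
  have "sepconj (map (\<lambda>a h. pto_sat s' h a) pt @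
                    map (\<lambda>a h. case a of PAtom Q xs ys \<Rightarrow> PS' Q (map (fst s') xs) (map (snd s') ys) h) pr) h"
    apply (rule sepconj_mono[OF _ s'(4)])
    apply (rule list_all2_appendI)
     apply (simp add: list_all2_map1 list_all2_map2 list_all2_same)
    apply (simp add: list_all2_map1 list_all2_map2 list_all2_same split: patom.split)
    using assms(1) by blast
  then show ?thesis unfolding SH sh_sat.simps
    apply -
    apply (rule exI[of _ s'])
    using s' by blast
qed

definition Fop where
  "Fop I nil S = (\<lambda>X. {(Q, ls, ds, h). \<exists>r \<in> set (rules S Q). \<exists>s.
       map (fst s) (lparams S Q) = ls \<and> map (snd s) (dparams S Q) = ds \<and>
       sh_sat I nil (\<lambda>Q' ls' ds' h'. (Q', ls', ds', h') \<in> X) s h r})"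

lemma Fop_memI: "r \<in> set (rules S Q) \<Longrightarrow> map (fst s) (lparams S Q) = ls \<Longrightarrow>
  map (snd s) (dparams S Q) = ds \<Longrightarrow> sh_sat I nil (\<lambda>Q' ls' ds' h'. (Q', ls', ds', h') \<in> X) s h r \<Longrightarrow>
  (Q, ls, ds, h) \<in> Fop I nil S X"
  unfolding Fop_def by blast

lemma pred_sem_Fop: "pred_sem I nil S = lfp (Fop I nil S)"
  by (simp add: pred_sem_def Fop_def)

lemma mono_Fop: "mono (Fop I nil S)"
proof (rule monoI, rule subsetI)
  fix X Y x
  assume XY: "X \<subseteq> Y" and x: "x \<in> Fop I nil S X"
  obtain Q ls ds h where xe: "x = (Q, ls, ds, h)" by (cases x)
  from x obtain r s where r: "r \<in> set (rules S Q)" "map (fst s) (lparams S Q) = ls"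
     "map (snd s) (dparams S Q) = ds" "sh_sat I nil (\<lambda>Q' ls' ds' h'. (Q', ls', ds', h') \<in> X) s h r"
    unfolding Fop_def xe by blast
  have "sh_sat I nil (\<lambda>Q' ls' ds' h'. (Q', ls', ds', h') \<in> Y) s h r"
    by (rule sh_sat_mono[OF _ r(4)]) (use XY in blast)
  then show "x \<in> Fop I nil S Y" unfolding Fop_def xe using r by blast
qed

lemma core:
  assumes wf: "wf_sys S Ps" and PP: "P \<in> Ps"
    and lp: "lparams S P = \<alpha>1 # \<beta>1 # \<xi>l" and dp: "dparams S P = \<alpha>2 # \<beta>2 # \<xi>d"
    and baseex: "\<exists>pu. filter is_base (rules S P) = [SH [] [] pu [] []] \<and>
             set pu = {LEq (LV \<alpha>1) (LV \<beta>1), DEq \<alpha>2 \<beta>2}"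
    and ind: "\<forall>r \<in> set (rules S P). \<not> is_base r \<longrightarrow>
          (\<exists>zl zd pu pt pr \<Sigma>2 \<gamma>1 \<gamma>2.
             r = SH zl zd pu pt pr \<and> pt \<noteq> [] \<and>
             mset pr = mset (PAtom P (\<gamma>1 # \<beta>1 # \<xi>l) (\<gamma>2 # \<beta>2 # \<xi>d) # \<Sigma>2) \<and>
             \<gamma>1 \<in> set zl \<and> \<gamma>2 \<in> set zd \<and> \<gamma>1 \<noteq> \<beta>1 \<and> \<gamma>2 \<noteq> \<beta>2 \<and>
             \<beta>1 \<notin> (\<Union>p \<in> set pu. lvars_pure p) \<union> (\<Union>a \<in> set pt. lvars_pto a) \<union> (\<Union>a \<in> set \<Sigma>2. lvars_patom a) \<and>
             \<beta>2 \<notin> (\<Union>p \<in> set pu. dvars_pure p) \<union> (\<Union>a \<in> set pt. dvars_pto a) \<union> (\<Union>a \<in> set \<Sigma>2. dvars_patom a))"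
  shows "(P, a # b # xs, c # d # ys, h1) \<in> pred_sem I nil S \<Longrightarrow> hdisj h1 h2 \<Longrightarrow>
         (P, b # e # xs, d # f # ys, h2) \<in> pred_sem I nil S \<Longrightarrow>
         (P, a # e # xs, c # f # ys, hunion h1 h2) \<in> pred_sem I nil S"
proof -
  from baseex obtain pu0 where
    base: "filter is_base (rules S P) = [SH [] [] pu0 [] []]"
      "set pu0 = {LEq (LV \<alpha>1) (LV \<beta>1), DEq \<alpha>2 \<beta>2}" by blast
  have dl: "distinct (lparams S P)" "distinct (dparams S P)"
    and wfr: "\<forall>r\<in>set (rules S P). wf_rule S Ps P r"
    using wf PP unfolding wf_sys_def by auto
  have ab: "\<alpha>1 \<noteq> \<beta>1" "\<beta>1 \<notin> set \<xi>l" "\<alpha>2 \<noteq> \<beta>2" "\<beta>2 \<notin> set \<xi>d"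
    using dl lp dp by auto
  let ?F = "Fop I nil S"
  note mono = mono_Fop[of I nil S]
  define PP where "PP = {(Q, ls, ds, h1). Q = P \<longrightarrow> (\<forall>a b xs c d ys e f h2. ls = a#b#xs \<longrightarrow> ds = c#d#ys \<longrightarrow>
      hdisj h1 h2 \<longrightarrow> (P, b#e#xs, d#f#ys, h2) \<in> lfp ?F \<longrightarrow> (P, a#e#xs, c#f#ys, hunion h1 h2) \<in> lfp ?F)}"
  have "lfp ?F \<subseteq> PP"
  proof (rule lfp_induct[OF mono], rule subsetI)
    fix x assume x: "x \<in> ?F (lfp ?F \<inter> PP)"
    obtain Q ls ds h1 where xe: "x = (Q, ls, ds, h1)" by (cases x)
    from x obtain r s where r: "r \<in> set (rules S Q)" "map (fst s) (lparams S Q) = ls"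
       "map (snd s) (dparams S Q) = ds" "sh_sat I nil (\<lambda>Q' ls' ds' h'. (Q', ls', ds', h') \<in> lfp ?F \<inter> PP) s h1 r"
      unfolding Fop_def xe by blast
    show "x \<in> PP" unfolding xe PP_def
    proof (clarsimp simp del: split_paired_All)
      fix a b xs c d ys e f h2
      assume QP: "Q = P" and ls: "ls = a # b # xs" and ds: "ds = c # d # ys"
        and dj: "hdisj h1 h2" and m2: "(P, b # e # xs, d # f # ys, h2) \<in> lfp ?F"
      have sa: "fst s \<alpha>1 = a" "fst s \<beta>1 = b" "map (fst s) \<xi>l = xs"
        using r(2) QP ls lp by auto
      have sd: "snd s \<alpha>2 = c" "snd s \<beta>2 = d" "map (snd s) \<xi>d = ys"
        using r(3) QP ds dp by auto
      show "(P, a # e # xs, c # f # ys, hunion h1 h2) \<in> lfp ?F"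
      proof (cases "is_base r")
        case True
        then have "r \<in> set (filter is_base (rules S P))" using r(1) QP by simp
        then have re: "r = SH [] [] pu0 [] []" using base by simp
        from r(4) obtain s' where s': "\<forall>x. fst s' x = fst s x" "\<forall>y. snd s' y = snd s y"
          "\<forall>p \<in> set pu0. pure_sat I nil s' p" "h1 = hemp"
          unfolding re by auto
        have "fst s' \<alpha>1 = fst s' \<beta>1" "snd s' \<alpha>2 = snd s' \<beta>2"
          using s'(3) base(2) by auto
        then have "a = b" "c = d" using s' sa sd by auto
        then show ?thesis using m2 s'(4) by simp
      next
        case False
        have rP: "r \<in> set (rules S P)" using r(1) QP by simp
        have "\<exists>zl zd pu pt pr \<Sigma>2 \<gamma>1 \<gamma>2.
             r = SH zl zd pu pt pr \<and> pt \<noteq> [] \<and>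
             mset pr = mset (PAtom P (\<gamma>1 # \<beta>1 # \<xi>l) (\<gamma>2 # \<beta>2 # \<xi>d) # \<Sigma>2) \<and>
             \<gamma>1 \<in> set zl \<and> \<gamma>2 \<in> set zd \<and> \<gamma>1 \<noteq> \<beta>1 \<and> \<gamma>2 \<noteq> \<beta>2 \<and>
             \<beta>1 \<notin> (\<Union>p \<in> set pu. lvars_pure p) \<union> (\<Union>a \<in> set pt. lvars_pto a) \<union> (\<Union>a \<in> set \<Sigma>2. lvars_patom a) \<and>
             \<beta>2 \<notin> (\<Union>p \<in> set pu. dvars_pure p) \<union> (\<Union>a \<in> set pt. dvars_pto a) \<union> (\<Union>a \<in> set \<Sigma>2. dvars_patom a)"
          by (rule mp[OF bspec[OF ind rP] False])
        then obtain zl zd pu pt pr \<Sigma>2 \<gamma>1 \<gamma>2 where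
          re: "r = SH zl zd pu pt pr" and
          ms: "mset pr = mset (PAtom P (\<gamma>1 # \<beta>1 # \<xi>l) (\<gamma>2 # \<beta>2 # \<xi>d) # \<Sigma>2)" and
          g: "\<gamma>1 \<noteq> \<beta>1" "\<gamma>2 \<noteq> \<beta>2" and
          nb1: "\<beta>1 \<notin> (\<Union>p \<in> set pu. lvars_pure p) \<union> (\<Union>a \<in> set pt. lvars_pto a) \<union> (\<Union>a \<in> set \<Sigma>2. lvars_patom a)" and
          nb2: "\<beta>2 \<notin> (\<Union>p \<in> set pu. dvars_pure p) \<union> (\<Union>a \<in> set pt. dvars_pto a) \<union> (\<Union>a \<in> set \<Sigma>2. dvars_patom a)"
          by (elim exE conjE) (rule that, assumption+)
        have "wf_rule S Ps P (SH zl zd pu pt pr)" using wfr rP re by blast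
        then have wr: "set zl \<inter> set (lparams S P) = {}" "set zd \<inter> set (dparams S P) = {}"
          by simp_all
        let ?Pat = "PAtom P (\<gamma>1 # \<beta>1 # \<xi>l) (\<gamma>2 # \<beta>2 # \<xi>d)"
        let ?X = "lfp ?F \<inter> PP"
        from r(4) obtain s' where s': "\<forall>x. x \<notin> set zl \<longrightarrow> fst s' x = fst s x"
          "\<forall>y. y \<notin> set zd \<longrightarrow> snd s' y = snd s y" "\<forall>p \<in> set pu. pure_sat I nil s' p"
          "sepconj (map (\<lambda>a h. pto_sat s' h a) pt @
              map (\<lambda>a h. case a of PAtom Q xs ys \<Rightarrow> (Q, map (fst s') xs, map (snd s') ys, h) \<in> ?X) pr) h1"
          using r(4) unfolding re sh_sat.simps by blast
        have s'a: "fst s' \<alpha>1 = a" "fst s' \<beta>1 = b" "map (fst s') \<xi>l = xs"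
        proof -
          have "\<forall>x \<in> set (lparams S P). fst s' x = fst s x" using s'(1) wr by auto
          then show "fst s' \<alpha>1 = a" "fst s' \<beta>1 = b" "map (fst s') \<xi>l = xs"
            using sa lp by auto
        qed
        have s'd: "snd s' \<alpha>2 = c" "snd s' \<beta>2 = d" "map (snd s') \<xi>d = ys"
        proof -
          have "\<forall>x \<in> set (dparams S P). snd s' x = snd s x" using s'(2) wr by auto
          then show "snd s' \<alpha>2 = c" "snd s' \<beta>2 = d" "map (snd s') \<xi>d = ys"
            using sd dp by auto
        qed
        define s'' where "s'' = ((fst s')(\<beta>1 := e), (snd s')(\<beta>2 := f))"
        have s''l: "\<And>x. x \<noteq> \<beta>1 \<Longrightarrow> fst s'' x = fst s' x" "fst s'' \<beta>1 = e"
          and s''d: "\<And>y. y \<noteq> \<beta>2 \<Longrightarrow> snd s'' y = snd s' y" "snd s'' \<beta>2 = f"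
          unfolding s''_def by auto
        have s''x: "map (fst s'') \<xi>l = xs" "map (snd s'') \<xi>d = ys"
          using s'a(3) s'd(3) ab unfolding s''_def by simp_all
        have "?Pat \<in> set pr"
          by (metis ms list.set_intros(1) set_mset_mset)
        then obtain pr1 pr2 where prs: "pr = pr1 @ ?Pat # pr2" by (meson split_list)
        have "mset pr1 + mset pr2 = mset \<Sigma>2" using ms prs by simp
        then have sub: "set pr1 \<subseteq> set \<Sigma>2" "set pr2 \<subseteq> set \<Sigma>2"
          by (metis Un_iff set_mset_mset set_mset_union subsetI)+
        define g' where "g' = (\<lambda>a h. case a of PAtom Q xs ys \<Rightarrow> (Q, map (fst s') xs, map (snd s') ys, h) \<in> ?X)"
        define g'' where "g'' = (\<lambda>a h. case a of PAtom Q xs ys \<Rightarrow> (Q, map (fst s'') xs, map (snd s'') ys, h) \<in> lfp ?F)"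
        have pteq: "map (\<lambda>a h. pto_sat s'' h a) pt = map (\<lambda>a h. pto_sat s' h a) pt"
        proof (rule map_cong[OF refl], rule ext)
          fix a h assume "a \<in> set pt"
          then show "pto_sat s'' h a = pto_sat s' h a"
            using nb1 nb2 by (intro pto_sat_cong) (auto simp: s''_def)
        qed
        have sig: "\<forall>a \<in> set pr1 \<union> set pr2. \<forall>h. g' a h \<longrightarrow> g'' a h"
        proof (intro ballI allI impI)
          fix a h assume a: "a \<in> set pr1 \<union> set pr2" and ga: "g' a h"
          obtain Q' xs' ys' where ae: "a = PAtom Q' xs' ys'" by (cases a)
          have "a \<in> set \<Sigma>2" using a sub by auto
          then have "\<beta>1 \<notin> set xs'" "\<beta>2 \<notin> set ys'" using nb1 nb2 ae by auto
          then have "map (fst s'') xs' = map (fst s') xs'" "map (snd s'') ys' = map (snd s') ys'"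
            unfolding s''_def by simp_all
          then show "g'' a h" using ga unfolding g'_def g''_def ae patom.case by (metis IntD1)
        qed
        have sc1: "sepconj ((map (\<lambda>a h. pto_sat s' h a) pt @ map g' pr1) @ g' ?Pat # map g' pr2) h1"
          using s'(4) prs unfolding g'_def by simp
        have sc2: "sepconj ((map (\<lambda>a h. pto_sat s' h a) pt @ map g' pr1) @ g'' ?Pat # map g' pr2) (hunion h1 h2)"
        proof (rule sc_mod[OF sc1 dj])
          fix h' assume "g' ?Pat h'" "hdisj h' h2"
          then have "(P, fst s' \<gamma>1 # b # xs, snd s' \<gamma>2 # d # ys, h') \<in> PP"
            unfolding g'_def using s'a s'd by simp
          then have "(P, fst s' \<gamma>1 # e # xs, snd s' \<gamma>2 # f # ys, hunion h' h2) \<in> lfp ?F"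
            unfolding PP_def using \<open>hdisj h' h2\<close> m2 by blast
          then show "g'' ?Pat (hunion h' h2)"
            unfolding g''_def using s''l s''d s''x g by simp
        qed
        have sc3: "sepconj ((map (\<lambda>a h. pto_sat s'' h a) pt @ map g'' pr1) @ g'' ?Pat # map g'' pr2) (hunion h1 h2)"
          unfolding pteq
          apply (rule sepconj_mono[OF _ sc2])
          apply (intro list_all2_appendI list_all2_Cons)
          using sig by (auto simp: list_all2_map1 list_all2_map2 list_all2_same)
        have shs: "sh_sat I nil (\<lambda>Q' ls' ds' h'. (Q', ls', ds', h') \<in> lfp ?F) s'' (hunion h1 h2) r"
          unfolding re sh_sat.simps
        proof (rule exI[of _ s''], intro conjI allI impI ballI)
          fix p assume "p \<in> set pu"
          then show "pure_sat I nil s'' p"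
            using s'(3) nb1 nb2 pure_sat_cong[of p s'' s' I nil] by (auto simp: s''_def)
        next
          show "sepconj (map (\<lambda>a h. pto_sat s'' h a) pt @
            map (\<lambda>a h. case a of PAtom Q xs ys \<Rightarrow> (\<lambda>Q' ls' ds' h'. (Q', ls', ds', h') \<in> lfp ?F) Q (map (fst s'') xs) (map (snd s'') ys) h) pr)
           (hunion h1 h2)"
            using sc3 prs unfolding g''_def by simp
        qed auto
        have meqs: "map (fst s'') (lparams S P) = a # e # xs" "map (snd s'') (dparams S P) = c # f # ys"
          using lp dp s''l s''d s''x s'a s'd ab by auto
        have "(P, a # e # xs, c # f # ys, hunion h1 h2) \<in> ?F (lfp ?F)"
          by (rule Fop_memI[OF rP meqs shs])
        then show ?thesis using lfp_fixpoint[OF mono] by simp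
      qed
    qed
  qed
  then show "(P, a # b # xs, c # d # ys, h1) \<in> pred_sem I nil S \<Longrightarrow> hdisj h1 h2 \<Longrightarrow>
         (P, b # e # xs, d # f # ys, h2) \<in> pred_sem I nil S \<Longrightarrow>
         (P, a # e # xs, c # f # ys, hunion h1 h2) \<in> pred_sem I nil S"
  proof -
    assume m1: "(P, a # b # xs, c # d # ys, h1) \<in> pred_sem I nil S" and dj: "hdisj h1 h2"
      and m2: "(P, b # e # xs, d # f # ys, h2) \<in> pred_sem I nil S"
    have "(P, a # b # xs, c # d # ys, h1) \<in> PP" using m1 \<open>lfp ?F \<subseteq> PP\<close> unfolding pred_sem_Fop by blast
    then have "\<forall>e f h2. hdisj h1 h2 \<longrightarrow> (P, b#e#xs, d#f#ys, h2) \<in> lfp ?F \<longrightarrow> (P, a#e#xs, c#f#ys, hunion h1 h2) \<in> lfp ?F"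
      unfolding PP_def by simp
    then show ?thesis using dj m2 unfolding pred_sem_Fop by blast
  qed
qed

theorem theorem1:
  fixes S :: "('x,'y,'r,'f,'g,'p) sys"
    and I :: "'r \<Rightarrow> 'd list \<Rightarrow> bool"
    and nil :: 'l
    and Ps :: "'p set"
  assumes "wf_sys S Ps"
    and "P \<in> Ps"
    and "syn_compositional S P"
  shows "sem_compositional I nil S P"
proof -
  from assms(3) obtain \<alpha>1 \<beta>1 \<xi>l \<alpha>2 \<beta>2 \<xi>d where
    lp: "lparams S P = \<alpha>1 # \<beta>1 # \<xi>l" and dp: "dparams S P = \<alpha>2 # \<beta>2 # \<xi>d"
    and baseex: "\<exists>pu. filter is_base (rules S P) = [SH [] [] pu [] []] \<and>
             set pu = {LEq (LV \<alpha>1) (LV \<beta>1), DEq \<alpha>2 \<beta>2}"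
    and nb: "\<exists>r \<in> set (rules S P). \<not> is_base r"
    and ind: "\<forall>r \<in> set (rules S P). \<not> is_base r \<longrightarrow>
          (\<exists>zl zd pu pt pr \<Sigma>2 \<gamma>1 \<gamma>2.
             r = SH zl zd pu pt pr \<and> pt \<noteq> [] \<and>
             mset pr = mset (PAtom P (\<gamma>1 # \<beta>1 # \<xi>l) (\<gamma>2 # \<beta>2 # \<xi>d) # \<Sigma>2) \<and>
             \<gamma>1 \<in> set zl \<and> \<gamma>2 \<in> set zd \<and> \<gamma>1 \<noteq> \<beta>1 \<and> \<gamma>2 \<noteq> \<beta>2 \<and>
             \<beta>1 \<notin> (\<Union>p \<in> set pu. lvars_pure p) \<union> (\<Union>a \<in> set pt. lvars_pto a) \<union> (\<Union>a \<in> set \<Sigma>2. lvars_patom a) \<and>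
             \<beta>2 \<notin> (\<Union>p \<in> set pu. dvars_pure p) \<union> (\<Union>a \<in> set pt. dvars_pto a) \<union> (\<Union>a \<in> set \<Sigma>2. dvars_patom a))"
    unfolding syn_compositional_def by (elim exE conjE) (rule that, (assumption | blast)+)
  note C = core[OF assms(1,2) lp dp baseex ind]
  have ab: "\<alpha>1 \<noteq> \<beta>1" "\<beta>1 \<notin> set \<xi>l" "\<alpha>2 \<noteq> \<beta>2" "\<beta>2 \<notin> set \<xi>d"
    using assms(1,2) lp dp unfolding wf_sys_def by auto
  show ?thesis
    unfolding sem_compositional_def
  proof (intro exI conjI allI impI)
    show "lparams S P = \<alpha>1 # \<beta>1 # \<xi>l" "dparams S P = \<alpha>2 # \<beta>2 # \<xi>d" using lp dp by auto
  next
    fix \<gamma>1 \<gamma>2 assume g: "\<gamma>1 \<noteq> \<beta>1 \<and> \<gamma>2 \<noteq> \<beta>2"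
    show "entails I nil S
            (SH [\<beta>1] [\<beta>2] [] []
               [PAtom P (\<alpha>1 # \<beta>1 # \<xi>l) (\<alpha>2 # \<beta>2 # \<xi>d), PAtom P (\<beta>1 # \<gamma>1 # \<xi>l) (\<beta>2 # \<gamma>2 # \<xi>d)])
            (SH [] [] [] [] [PAtom P (\<alpha>1 # \<gamma>1 # \<xi>l) (\<alpha>2 # \<gamma>2 # \<xi>d)])"
      unfolding entails_def
    proof (intro allI impI)
      fix s :: "('x,'y,'l,'d) stack" and h :: "('l,'f,'g,'d) heap"
      assume "sat I nil S s h
          (SH [\<beta>1] [\<beta>2] [] []
               [PAtom P (\<alpha>1 # \<beta>1 # \<xi>l) (\<alpha>2 # \<beta>2 # \<xi>d), PAtom P (\<beta>1 # \<gamma>1 # \<xi>l) (\<beta>2 # \<gamma>2 # \<xi>d)])"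
      then obtain s' where s': "\<forall>x. x \<noteq> \<beta>1 \<longrightarrow> fst s' x = fst s x" "\<forall>y. y \<noteq> \<beta>2 \<longrightarrow> snd s' y = snd s y"
        "sepconj [\<lambda>h. (P, map (fst s') (\<alpha>1 # \<beta>1 # \<xi>l), map (snd s') (\<alpha>2 # \<beta>2 # \<xi>d), h) \<in> pred_sem I nil S,
                  \<lambda>h. (P, map (fst s') (\<beta>1 # \<gamma>1 # \<xi>l), map (snd s') (\<beta>2 # \<gamma>2 # \<xi>d), h) \<in> pred_sem I nil S] h"
        unfolding sat_def sh_sat.simps by (simp del: split_paired_Ex split_paired_All) blast
      then obtain h1 h2 where hh: "hdisj h1 h2" "h = hunion h1 h2"
        "(P, map (fst s') (\<alpha>1 # \<beta>1 # \<xi>l), map (snd s') (\<alpha>2 # \<beta>2 # \<xi>d), h1) \<in> pred_sem I nil S"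
        "(P, map (fst s') (\<beta>1 # \<gamma>1 # \<xi>l), map (snd s') (\<beta>2 # \<gamma>2 # \<xi>d), h2) \<in> pred_sem I nil S"
        by (simp only: sepconj.simps) (metis hunion_hemp(1))
      have r: "(P, fst s' \<alpha>1 # fst s' \<gamma>1 # map (fst s') \<xi>l, snd s' \<alpha>2 # snd s' \<gamma>2 # map (snd s') \<xi>d, hunion h1 h2) \<in> pred_sem I nil S"
        using C hh by simp
      have e: "fst s' \<alpha>1 = fst s \<alpha>1" "fst s' \<gamma>1 = fst s \<gamma>1" "map (fst s') \<xi>l = map (fst s) \<xi>l"
        "snd s' \<alpha>2 = snd s \<alpha>2" "snd s' \<gamma>2 = snd s \<gamma>2" "map (snd s') \<xi>d = map (snd s) \<xi>d"
        using s'(1,2) ab g by (auto intro!: map_cong)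
      have r2: "(P, map (fst s) (\<alpha>1 # \<gamma>1 # \<xi>l), map (snd s) (\<alpha>2 # \<gamma>2 # \<xi>d), h) \<in> pred_sem I nil S"
        using r e hh(2) by simp
      show "sat I nil S s h (SH [] [] [] [] [PAtom P (\<alpha>1 # \<gamma>1 # \<xi>l) (\<alpha>2 # \<gamma>2 # \<xi>d)])"
        unfolding sat_def sh_sat.simps
        apply (rule exI[of _ s])
        apply (simp only: list.map append.simps sepconj.simps patom.case)
        apply (intro conjI allI impI ballI refl)
         apply simp
        apply (rule exI[of _ h], rule exI[of _ hemp])
        using r2 by simp
    qed
  qed
qed

end
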